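(* Let $N$ be even, $l\ge k>1$, and $\psi,\varphi$ Dirichlet characters mod $N$. There do not exist Hecke eigenforms $f\in\mathcal M_k(N,\psi)$ and $g\in\mathcal M_l(N,\varphi)$, both with nonzero constant term, such that $fg$ is a Hecke eigenform. Equivalently, $E_k^{\mathbf 1_1,\psi}\cdot E_l^{\mathbf 1_1,\varphi}=-\big(\tfrac{B_{k,\psi}}{2k}+\tfrac{B_{l,\varphi}}{2l}\big)E_{k+l}^{\mathbf 1_1,\psi\varphi}$ never holds with these forms being eigenforms.
   Context: $\mathcal M_k(N,\chi)$: weight-$k$ modular forms on $\Gamma_1(N)$ with Nebentypus $\chi$ (characters mod $N$, not necessarily primitive, extended by $0$ off the units). Hecke eigenform: nonzero form that is an eigenvector for all $T_n$ (including $n$ not coprime to $N$) and all $\langle n\rangle$. $E_k^{\mathbf 1_1,\chi}(z)=-\frac{B_{k,\chi}}{2k}+\sum_{n\ge1}\big(\sum_{d\mid n}\chi(d)d^{k-1}\big)q^n$, where $B_{k,\chi}$ is the generalized Bernoulli number defined by $\sum_{a=1}^{N}\chi(a)\frac{te^{at}}{e^{Nt}-1}=\sum_{n}B_{n,\chi}\frac{t^n}{n!}$. *)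

theory Defs
  imports "HOL-Analysis.Analysis"
begin

definition UHP :: "complex set" where
  "UHP = {z. Im z > 0}"

(* Integer 2x2 matrices (a,b,c,d) = [[a,b],[c,d]] *)
definition SL2Z :: "(int \<times> int \<times> int \<times> int) set" where
  "SL2Z = {(a,b,c,d). a * d - b * c = 1}"

definition Gamma0 :: "nat \<Rightarrow> (int \<times> int \<times> int \<times> int) set" where
  "Gamma0 N = {(a,b,c,d). (a,b,c,d) \<in> SL2Z \<and> int N dvd c}"

definition moebius :: "int \<times> int \<times> int \<times> int \<Rightarrow> complex \<Rightarrow> complex" where
  "moebius \<gamma> z = (case \<gamma> of (a,b,c,d) \<Rightarrow>
      (of_int a * z + of_int b) / (of_int c * z + of_int d))"

definition autfac :: "int \<times> int \<times> int \<times> int \<Rightarrow> complex \<Rightarrow> complex" where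
  "autfac \<gamma> z = (case \<gamma> of (a,b,c,d) \<Rightarrow> of_int c * z + of_int d)"

definition lower_right :: "int \<times> int \<times> int \<times> int \<Rightarrow> int" where
  "lower_right \<gamma> = (case \<gamma> of (a,b,c,d) \<Rightarrow> d)"

definition dirichlet_character :: "nat \<Rightarrow> (int \<Rightarrow> complex) \<Rightarrow> bool" where
  "dirichlet_character N chr \<longleftrightarrow> N > 0 \<and>
     (\<forall>a. chr (a + int N) = chr a) \<and>
     (\<forall>a b. chr (a * b) = chr a * chr b) \<and>
     chr 1 = 1 \<and>
     (\<forall>a. chr a = 0 \<longleftrightarrow> \<not> coprime a (int N))"

(* M_k(N,chi): holomorphic on the upper half plane, f|_k gamma = chi(d) f for
   gamma in Gamma_0(N) (hence invariant under Gamma_1(N)), and holomorphic at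
   all cusps (f|_k gamma bounded as Im z -> infinity, for every gamma in SL2(Z)) *)
definition modular_form :: "nat \<Rightarrow> nat \<Rightarrow> (int \<Rightarrow> complex) \<Rightarrow> (complex \<Rightarrow> complex) \<Rightarrow> bool" where
  "modular_form k N chr f \<longleftrightarrow>
     f holomorphic_on UHP \<and>
     (\<forall>\<gamma>\<in>Gamma0 N. \<forall>z\<in>UHP.
        f (moebius \<gamma> z) = chr (lower_right \<gamma>) * (autfac \<gamma> z) ^ k * f z) \<and>
     (\<forall>\<gamma>\<in>SL2Z. \<exists>C B. \<forall>z. Im z > C \<longrightarrow>
        cmod (f (moebius \<gamma> z) / (autfac \<gamma> z) ^ k) \<le> B)"

definition qcoeff :: "(complex \<Rightarrow> complex) \<Rightarrow> nat \<Rightarrow> complex" where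
  "qcoeff f n = integral {0..1} (\<lambda>x::real.
      f (of_real x + \<i>) * exp (- 2 * of_real pi * \<i> * of_nat n * (of_real x + \<i>)))"

(* m-th q-coefficient of T_n f for f in M_k(N,chi) (n >= 1, any n, including
   n not coprime to N, with chi extended by zero) *)
definition hecke_coeff :: "nat \<Rightarrow> (int \<Rightarrow> complex) \<Rightarrow> nat \<Rightarrow> (complex \<Rightarrow> complex) \<Rightarrow> nat \<Rightarrow> complex" where
  "hecke_coeff k chr n f m =
     (\<Sum>d | d dvd gcd m n. chr (int d) * of_nat d ^ (k - 1) * qcoeff f (m * n div d\<^sup>2))"

(* Hecke eigenform in M_k(N,chi): nonzero, and eigenvector of every T_n (n>=1).
   The diamond operators act by chi on M_k(N,chi), so they are automatic. *)
definition hecke_eigenform :: "nat \<Rightarrow> nat \<Rightarrow> (int \<Rightarrow> complex) \<Rightarrow> (complex \<Rightarrow> complex) \<Rightarrow> bool" where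
  "hecke_eigenform k N chr f \<longleftrightarrow>
     modular_form k N chr f \<and> (\<exists>z\<in>UHP. f z \<noteq> 0) \<and>
     (\<forall>n\<ge>1. \<exists>ev. \<forall>m. hecke_coeff k chr n f m = ev * qcoeff f m)"

end

theory Submission imports Defs "HOL-Complex_Analysis.Complex_Analysis" begin
lemma circ_eq: "of_real (exp (-2*pi)) * exp (2 * of_real pi * \<i> * of_real x) =
   exp (2 * of_real pi * \<i> * (of_real x + \<i>))"
proof -
  have "exp (2 * of_real pi * \<i> * (of_real x + \<i>)) = exp (2 * of_real pi * \<i> * of_real x + of_real (-2*pi))"
    by (simp add: algebra_simps)
  also have "\<dots> = exp (2 * of_real pi * \<i> * of_real x) * of_real (exp (-2*pi))"
    by (simp only: exp_add exp_of_real)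
  finally show ?thesis by simp
qed

lemma qcoeff_from_G:
  assumes G: "G holomorphic_on ball 0 1"
    and h: "\<And>x::real. h (of_real x + \<i>) = G (exp (2 * of_real pi * \<i> * (of_real x + \<i>)))"
  shows "qcoeff h n = (deriv ^^ n) G 0 / fact n"
proof -
  define r where "r = exp (-2*pi)"
  have r0: "0 < r" by (simp add: r_def)
  have r1: "r < 1" by (simp add: r_def)
  have sub: "cball 0 r \<subseteq> ball (0::complex) 1" using r1 by auto
  have cont: "continuous_on (cball 0 r) G"
    using holomorphic_on_imp_continuous_on[OF G] continuous_on_subset sub by blast
  have holr: "G holomorphic_on ball 0 r"
    using G holomorphic_on_subset sub ball_subset_cball by blast
  have ci: "((\<lambda>u. G u / (u - 0) ^ (Suc n)) has_contour_integral ((2 * pi * \<i>) / (fact n) * (deriv ^^ n) G 0))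
           (circlepath 0 r)"
    by (rule Cauchy_has_contour_integral_higher_derivative_circlepath[OF cont holr]) (simp add: r0)
  define E where "E = (\<lambda>x::real. exp (2 * of_real pi * \<i> * (of_real x + \<i>)))"
  have gam: "circlepath 0 r x = E x" for x
    unfolding circlepath E_def r_def using circ_eq by simp
  have vd: "vector_derivative (circlepath 0 r) (at x) = 2 * pi * \<i> * E x" for x
    unfolding vector_derivative_circlepath E_def r_def using circ_eq[of x]
    by (simp add: mult.assoc)
  have En: "E x ^ n * exp (- 2 * of_real pi * \<i> * of_nat n * (of_real x + \<i>)) = 1" for x
  proof -
    have "E x ^ n = exp (of_nat n * (2 * of_real pi * \<i> * (of_real x + \<i>)))"
      unfolding E_def by (simp add: exp_of_nat_mult)
    then show ?thesis by (simp add: exp_add[symmetric] algebra_simps)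
  qed
  have pt: "(\<lambda>x. G (circlepath 0 r x) / (circlepath 0 r x - 0) ^ Suc n * vector_derivative (circlepath 0 r) (at x))
      = (\<lambda>x. (2 * pi * \<i>) * (h (of_real x + \<i>) * exp (- 2 * of_real pi * \<i> * of_nat n * (of_real x + \<i>))))"
  proof
    fix x
    have Ex: "E x \<noteq> 0" by (simp add: E_def)
    have e: "exp (- 2 * of_real pi * \<i> * of_nat n * (of_real x + \<i>)) = 1 / E x ^ n"
      using En[of x] Ex by (simp add: field_simps)
    have hx: "h (of_real x + \<i>) = G (E x)" by (simp add: h E_def)
    show "G (circlepath 0 r x) / (circlepath 0 r x - 0) ^ Suc n * vector_derivative (circlepath 0 r) (at x)
      = (2 * pi * \<i>) * (h (of_real x + \<i>) * exp (- 2 * of_real pi * \<i> * of_nat n * (of_real x + \<i>)))"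
      unfolding gam vd e hx using Ex by (simp add: field_simps)
  qed
  have hi: "((\<lambda>x. (2 * pi * \<i>) * (h (of_real x + \<i>) * exp (- 2 * of_real pi * \<i> * of_nat n * (of_real x + \<i>))))
       has_integral ((2 * pi * \<i>) / (fact n) * (deriv ^^ n) G 0)) {0..1}"
    using ci unfolding has_contour_integral pt .
  have "((\<lambda>x. h (of_real x + \<i>) * exp (- 2 * of_real pi * \<i> * of_nat n * (of_real x + \<i>)))
       has_integral ((2 * pi * \<i>) / (fact n) * (deriv ^^ n) G 0 / (2 * pi * \<i>))) {0..1}"
    using hi by (subst (asm) has_integral_mult_right_iff) auto
  then show ?thesis unfolding qcoeff_def by (simp add: integral_unique)
qed

lemma qexp_exists:
  fixes f :: "complex \<Rightarrow> complex"
  assumes hol: "f holomorphic_on UHP"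
    and per: "\<And>z n. z \<in> UHP \<Longrightarrow> f (z + of_int n) = f z"
    and bnd: "\<And>z. Im z > C \<Longrightarrow> cmod (f z) \<le> B"
  shows "\<exists>G. G holomorphic_on ball 0 1 \<and> (\<forall>z\<in>UHP. G (exp (2 * of_real pi * \<i> * z)) = f z)"
proof -
  define e where "e z = exp (2 * of_real pi * \<i> * z)" for z :: complex
  define L where "L q = Ln q / (2 * of_real pi * \<i>)" for q :: complex
  define F where "F q = f (L q)" for q
  define D where "D = ball (0::complex) 1 - {0}"
  have openD: "open D" unfolding D_def by auto
  have eL: "e (L q) = q" if "q \<noteq> 0" for q
    using that by (simp add: e_def L_def)
  have ImL: "Im (L q) = - ln (cmod q) / (2 * pi)" if "q \<noteq> 0" for q
  proof -
    have "L q = - \<i> * Ln q / (2 * of_real pi)" by (simp add: L_def field_simps)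
    then show ?thesis using that by (simp add: Re_Ln)
  qed
  have LU: "L q \<in> UHP" if "q \<in> D" for q
  proof -
    have "q \<noteq> 0" "cmod q < 1" using that by (auto simp: D_def)
    then have "ln (cmod q) < 0" by simp
    then show ?thesis using ImL[OF \<open>q \<noteq> 0\<close>] by (simp add: UHP_def divide_neg_pos)
  qed
  have E_eq: "f z = f w" if zw: "z \<in> UHP" "w \<in> UHP" "e z = e w" for z w
  proof -
    obtain n :: int where "2 * of_real pi * \<i> * z = 2 * of_real pi * \<i> * w + (of_int (2 * n) * pi) * \<i>"
      using zw(3) unfolding e_def exp_eq by blast
    then have "(2 * of_real pi * \<i>) * z = (2 * of_real pi * \<i>) * (w + of_int n)"
      by (simp add: algebra_simps)
    moreover have "(2 * of_real pi * \<i>) \<noteq> (0::complex)" by simp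
    ultimately have "z = w + of_int n"
      using mult_left_cancel by blast
    then show ?thesis using per[OF zw(2)] by simp
  qed
  have eD: "e z \<in> D" if "z \<in> UHP" for z
    using that by (simp add: D_def e_def norm_exp_eq_Re UHP_def)
  have Fe: "F (e z) = f z" if "z \<in> UHP" for z
  proof -
    have "e z \<noteq> 0" by (simp add: e_def)
    then show ?thesis unfolding F_def
      using E_eq[OF LU[OF eD[OF that]] that] eL by simp
  qed
  define A1 where "A1 = D - \<real>\<^sub>\<le>\<^sub>0"
  define A2 where "A2 = D - \<real>\<^sub>\<ge>\<^sub>0"
  have oA1: "open A1" unfolding A1_def using openD by (intro open_Diff) auto
  have oA2: "open A2" unfolding A2_def using openD by (intro open_Diff) auto
  have h1: "F holomorphic_on A1"
  proof -
    have "L holomorphic_on A1" unfolding L_def A1_def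
      by (intro holomorphic_intros) auto
    moreover have "L ` A1 \<subseteq> UHP" using LU by (auto simp: A1_def)
    ultimately have "(f \<circ> L) holomorphic_on A1"
      using holomorphic_on_compose_gen hol by blast
    moreover have "F = f \<circ> L" by (simp add: F_def fun_eq_iff)
    ultimately show ?thesis by simp
  qed
  have h2: "F holomorphic_on A2"
  proof -
    define M where "M q = L (- q) + 1/2" for q
    have MU: "M q \<in> UHP" if "q \<in> A2" for q
    proof -
      have "- q \<in> D" using that by (auto simp: A2_def D_def)
      then have "Im (L (-q)) > 0" using LU by (auto simp: UHP_def)
      then show ?thesis by (simp add: M_def UHP_def)
    qed
    have eM: "e (M q) = q" if "q \<noteq> 0" for q
    proof -
      have "e (M q) = exp (2 * of_real pi * \<i> * L (-q) + of_real pi * \<i>)"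
        by (simp add: e_def M_def algebra_simps)
      also have "\<dots> = e (L (-q)) * exp (of_real pi * \<i>)"
        by (simp only: exp_add e_def)
      also have "\<dots> = q" using eL[of "-q"] that by simp
      finally show ?thesis .
    qed
    have FM: "F q = f (M q)" if "q \<in> A2" for q
      using Fe[OF MU[OF that]] eM that by (auto simp: A2_def D_def)
    have "M holomorphic_on A2" unfolding M_def L_def A2_def
    proof (intro holomorphic_intros)
      fix z assume "z \<in> D - \<real>\<^sub>\<ge>\<^sub>0"
      then show "- z \<notin> \<real>\<^sub>\<le>\<^sub>0"
        by (auto simp: nonpos_Reals_def nonneg_Reals_def) (metis minus_minus neg_0_le_iff_le of_real_minus)
    qed auto
    moreover have "M ` A2 \<subseteq> UHP" using MU by auto
    ultimately have "(f \<circ> M) holomorphic_on A2"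
      using holomorphic_on_compose_gen hol by blast
    then show ?thesis
      by (rule holomorphic_transform) (simp add: FM)
  qed
  have "A1 \<union> A2 = D"
    by (auto simp: A1_def A2_def D_def nonpos_Reals_def nonneg_Reals_def)
  then have hD: "F holomorphic_on (ball 0 1 - {0})"
    using holomorphic_on_Un[OF h1 h2 oA1 oA2] by (simp add: D_def)
  define d where "d = exp (- 2 * pi * (\<bar>C\<bar> + 1))"
  have d0: "d > 0" by (simp add: d_def)
  have ev: "eventually (\<lambda>q. norm (F q) \<le> B) (at 0)"
    unfolding eventually_at
  proof (intro exI conjI ballI impI)
    show "d > 0" by (fact d0)
    fix q :: complex assume "q \<in> UNIV" and q: "q \<noteq> 0 \<and> dist q 0 < d"
    then have "ln (cmod q) < ln d" using d0 by (simp add: ln_less_cancel_iff)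
    also have "ln d = - 2 * pi * (\<bar>C\<bar> + 1)" by (simp add: d_def)
    finally have b: "ln (cmod q) < - 2 * pi * (\<bar>C\<bar> + 1)" .
    have a: "(2 * pi) * Im (L q) = - ln (cmod q)" using ImL[of q] q by (simp add: field_simps)
    have "(2 * pi) * Im (L q) > (2 * pi) * (\<bar>C\<bar> + 1)" using a b by linarith
    then have "Im (L q) > \<bar>C\<bar> + 1" using pi_gt_zero mult_less_cancel_left_pos[of "2*pi"] by simp
    then show "norm (F q) \<le> B" unfolding F_def by (intro bnd) linarith
  qed
  have "0 \<in> interior (ball (0::complex) 1)" by simp
  then obtain G where G: "G holomorphic_on ball 0 1" "\<forall>z\<in>ball 0 1 - {0}. G z = F z"
    using holomorphic_on_extend_bounded[OF hD] ev by blast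
  show ?thesis
  proof (intro exI conjI ballI)
    fix z assume z: "z \<in> UHP"
    have "G (e z) = F (e z)" using G(2) eD[OF z] by (simp add: D_def)
    then show "G (exp (2 * of_real pi * \<i> * z)) = f z" using Fe[OF z] by (simp add: e_def)
  qed (fact G(1))
qed

lemma mf_per:
  assumes "modular_form k N chr f" "dirichlet_character N chr" "z \<in> UHP"
  shows "f (z + of_int n) = f z"
proof -
  have "(1, n, 0, 1) \<in> Gamma0 N" by (simp add: Gamma0_def SL2Z_def)
  then have "f (moebius (1, n, 0, 1) z) = chr (lower_right (1, n, 0, 1)) * (autfac (1, n, 0, 1) z) ^ k * f z"
    using assms(1,3) unfolding modular_form_def by blast
  moreover have "chr 1 = 1" using assms(2) by (simp add: dirichlet_character_def)
  ultimately show ?thesis by (simp add: moebius_def autfac_def lower_right_def add.commute)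
qed

lemma mf_bnd:
  assumes "modular_form k N chr f"
  shows "\<exists>C B. \<forall>z. Im z > C \<longrightarrow> cmod (f z) \<le> B"
proof -
  have "(1, 0, 0, 1) \<in> SL2Z" by (simp add: SL2Z_def)
  then obtain C B where "\<forall>z. Im z > C \<longrightarrow> cmod (f (moebius (1,0,0,1) z) / (autfac (1,0,0,1) z) ^ k) \<le> B"
    using assms unfolding modular_form_def by blast
  then show ?thesis by (auto simp: moebius_def autfac_def)
qed

lemma const_contra:
  assumes "modular_form k N chr f" "dirichlet_character N chr" "0 < k"
    and "\<forall>z\<in>UHP. f z = c" "c \<noteq> 0"
  shows False
proof -
  have N0: "N > 0" using assms(2) by (simp add: dirichlet_character_def)
  have chr1: "chr 1 = 1" using assms(2) by (simp add: dirichlet_character_def)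
  have g: "(1, 0, int N, 1) \<in> Gamma0 N" by (simp add: Gamma0_def SL2Z_def)
  have iU: "\<i> \<in> UHP" by (simp add: UHP_def)
  have "f (moebius (1, 0, int N, 1) \<i>) = chr (lower_right (1, 0, int N, 1)) * (autfac (1, 0, int N, 1) \<i>) ^ k * f \<i>"
    using assms(1) g iU unfolding modular_form_def by blast
  moreover have "moebius (1, 0, int N, 1) \<i> \<in> UHP"
    by (simp add: moebius_def UHP_def Im_divide power2_eq_square add_pos_nonneg)
  ultimately have "c = (of_nat N * \<i> + 1) ^ k * c"
    using assms(4) iU chr1 by (simp add: lower_right_def autfac_def)
  then have e: "(of_nat N * \<i> + 1) ^ k = (1::complex)" using assms(5) by simp
  have "of_nat N * \<i> + 1 = Complex 1 (real N)" by (simp add: complex_eq_iff)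
  then have "cmod (of_nat N * \<i> + 1) = sqrt (1 + (real N)^2)" by (simp add: cmod_def)
  moreover have "1 < sqrt (1 + (real N)^2)" using N0 by (simp add: real_less_rsqrt)
  ultimately have "1 < cmod (of_nat N * \<i> + 1)" by simp
  then have "1 < cmod (of_nat N * \<i> + 1) ^ k" using assms(3) by (simp add: one_less_power)
  then show False using e by (metis norm_one norm_power order_less_irrefl)
qed

lemma dvd2_set: "{d::nat. d dvd 2} = {1, 2}"
proof safe
  fix d :: nat assume "d dvd 2" "d \<noteq> 1"
  moreover have "d \<le> 2" using \<open>d dvd 2\<close> dvd_imp_le[of d 2] by simp
  moreover have "d \<noteq> 0" using \<open>d dvd 2\<close> by (metis dvd_0_left_iff zero_neq_numeral)
  ultimately show "d = 2" by auto
qed auto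

lemma hecke_two:
  assumes "hecke_eigenform k N chr f" "chr 1 = 1" "chr 2 = 0" "qcoeff f 0 \<noteq> 0"
  shows "qcoeff f 2 = qcoeff f 1"
proof -
  obtain ev where ev: "\<forall>m. hecke_coeff k chr 2 f m = ev * qcoeff f m"
    using assms(1) unfolding hecke_eigenform_def by force
  have "hecke_coeff k chr 2 f 0 = qcoeff f 0"
    using assms(2,3) by (simp add: hecke_coeff_def dvd2_set)
  then have "ev = 1" using ev assms(4) by (metis mult_cancel_right2)
  have "{d. d dvd gcd 1 (2::nat)} = {1}" by auto
  then have "hecke_coeff k chr 2 f 1 = qcoeff f 2"
    using assms(2) by (simp add: hecke_coeff_def)
  then show ?thesis using ev \<open>ev = 1\<close> by simp
qed

lemma hecke_vanish:
  assumes "hecke_eigenform k N chr f" "chr 1 = 1" "qcoeff f 1 = 0" "n \<ge> 1"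
  shows "qcoeff f n = 0"
proof -
  obtain ev where ev: "\<forall>m. hecke_coeff k chr n f m = ev * qcoeff f m"
    using assms(1,4) unfolding hecke_eigenform_def by force
  have "{d. d dvd gcd 1 n} = {1::nat}" by auto
  then have "hecke_coeff k chr n f 1 = qcoeff f n"
    using assms(2) by (simp add: hecke_coeff_def)
  then show ?thesis using ev assms(3) by simp
qed

lemma coeffs_G:
  assumes "modular_form k N chr f" "dirichlet_character N chr"
  shows "\<exists>G. G holomorphic_on ball 0 1 \<and> (\<forall>z\<in>UHP. G (exp (2 * of_real pi * \<i> * z)) = f z)
            \<and> (\<forall>n. qcoeff f n = (deriv ^^ n) G 0 / fact n)"
proof -
  obtain C B where bnd: "\<forall>z. Im z > C \<longrightarrow> cmod (f z) \<le> B" using mf_bnd[OF assms(1)] by blast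
  have hol: "f holomorphic_on UHP" using assms(1) by (simp add: modular_form_def)
  obtain G where G: "G holomorphic_on ball 0 1" "\<forall>z\<in>UHP. G (exp (2 * of_real pi * \<i> * z)) = f z"
    using qexp_exists[of f C B] hol mf_per[OF assms] bnd by blast
  have "qcoeff f n = (deriv ^^ n) G 0 / fact n" for n
    by (rule qcoeff_from_G[OF G(1)]) (use G(2) in \<open>simp add: UHP_def\<close>)
  then show ?thesis using G by blast
qed

lemma const_of_a1:
  assumes "hecke_eigenform k N chr f" "dirichlet_character N chr" "qcoeff f 1 = 0"
  shows "\<forall>z\<in>UHP. f z = qcoeff f 0"
proof -
  have mf: "modular_form k N chr f" using assms(1) by (simp add: hecke_eigenform_def)
  have chr1: "chr 1 = 1" using assms(2) by (simp add: dirichlet_character_def)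
  obtain G where G: "G holomorphic_on ball 0 1" "\<forall>z\<in>UHP. G (exp (2 * of_real pi * \<i> * z)) = f z"
     "\<forall>n. qcoeff f n = (deriv ^^ n) G 0 / fact n"
    using coeffs_G[OF mf assms(2)] by blast
  have der: "(deriv ^^ n) G 0 = 0" if "0 < n" for n
    using G(3) hecke_vanish[OF assms(1) chr1 assms(3), of n] that by simp
  show ?thesis
  proof
    fix z assume z: "z \<in> UHP"
    have "exp (2 * of_real pi * \<i> * z) \<in> ball 0 1"
      using z by (simp add: norm_exp_eq_Re UHP_def)
    then have "G (exp (2 * of_real pi * \<i> * z)) = G 0"
      by (intro holomorphic_fun_eq_const_on_connected[OF G(1)]) (auto simp: der)
    then show "f z = qcoeff f 0" using G(2) z G(3) by simp
  qed
qed

lemma two_not_coprime: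
  assumes "even N" shows "\<not> coprime (2::int) (int N)"
  using assms by simp

theorem proposition6p2:
  fixes N k l :: nat and \<psi> \<phi> :: "int \<Rightarrow> complex"
  assumes "even N"
    and "dirichlet_character N \<psi>" and "dirichlet_character N \<phi>"
    and "1 < k" and "k \<le> l"
  shows "\<not> (\<exists>f g. hecke_eigenform k N \<psi> f \<and> hecke_eigenform l N \<phi> g \<and>
              qcoeff f 0 \<noteq> 0 \<and> qcoeff g 0 \<noteq> 0 \<and>
              hecke_eigenform (k + l) N (\<lambda>a. \<psi> a * \<phi> a) (\<lambda>z. f z * g z))"
proof
  assume "\<exists>f g. hecke_eigenform k N \<psi> f \<and> hecke_eigenform l N \<phi> g \<and>
              qcoeff f 0 \<noteq> 0 \<and> qcoeff g 0 \<noteq> 0 \<and>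
              hecke_eigenform (k + l) N (\<lambda>a. \<psi> a * \<phi> a) (\<lambda>z. f z * g z)"
  then obtain f g where hf: "hecke_eigenform k N \<psi> f" and hg: "hecke_eigenform l N \<phi> g"
    and f0: "qcoeff f 0 \<noteq> 0" and g0: "qcoeff g 0 \<noteq> 0"
    and hh: "hecke_eigenform (k + l) N (\<lambda>a. \<psi> a * \<phi> a) (\<lambda>z. f z * g z)" by blast
  have nc: "\<not> coprime (2::int) (int N)" using two_not_coprime[OF assms(1)] .
  have psi1: "\<psi> 1 = 1" and psi2: "\<psi> 2 = 0"
    using assms(2) nc by (auto simp: dirichlet_character_def)
  have phi1: "\<phi> 1 = 1" and phi2: "\<phi> 2 = 0"
    using assms(3) nc by (auto simp: dirichlet_character_def)
  have mff: "modular_form k N \<psi> f" using hf by (simp add: hecke_eigenform_def)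
  have mfg: "modular_form l N \<phi> g" using hg by (simp add: hecke_eigenform_def)
  obtain Gf where Gf: "Gf holomorphic_on ball 0 1" "\<forall>z\<in>UHP. Gf (exp (2 * of_real pi * \<i> * z)) = f z"
     "\<forall>n. qcoeff f n = (deriv ^^ n) Gf 0 / fact n"
    using coeffs_G[OF mff assms(2)] by blast
  obtain Gg where Gg: "Gg holomorphic_on ball 0 1" "\<forall>z\<in>UHP. Gg (exp (2 * of_real pi * \<i> * z)) = g z"
     "\<forall>n. qcoeff g n = (deriv ^^ n) Gg 0 / fact n"
    using coeffs_G[OF mfg assms(3)] by blast
  have Gh: "(\<lambda>q. Gf q * Gg q) holomorphic_on ball 0 1" using Gf(1) Gg(1) by (intro holomorphic_intros)
  have qh: "qcoeff (\<lambda>z. f z * g z) n = (deriv ^^ n) (\<lambda>q. Gf q * Gg q) 0 / fact n" for n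
    by (rule qcoeff_from_G[OF Gh]) (use Gf(2) Gg(2) in \<open>simp add: UHP_def\<close>)
  have hm: "(deriv ^^ n) (\<lambda>q. Gf q * Gg q) 0 =
      (\<Sum>i = 0..n. of_nat (n choose i) * (deriv ^^ i) Gf 0 * (deriv ^^ (n-i)) Gg 0)" for n
    by (rule higher_deriv_mult[OF Gf(1) Gg(1)]) auto
  define a where "a i = (deriv ^^ i) Gf 0" for i
  define b where "b i = (deriv ^^ i) Gg 0" for i
  have c1: "qcoeff (\<lambda>z. f z * g z) 1 = a 0 * b 1 + a 1 * b 0"
    using qh[of 1] hm[of 1] by (simp add: a_def b_def)
  have c2: "qcoeff (\<lambda>z. f z * g z) 2 = (a 0 * b 2 + 2 * a 1 * b 1 + a 2 * b 0) / 2"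
    using qh[of 2] hm[of 2] by (simp add: a_def b_def numeral_2_eq_2 algebra_simps)
  have a12: "a 2 = 2 * a 1"
    using hecke_two[OF hf psi1 psi2 f0] Gf(3) by (simp add: a_def numeral_2_eq_2)
  have b12: "b 2 = 2 * b 1"
    using hecke_two[OF hg phi1 phi2 g0] Gg(3) by (simp add: b_def numeral_2_eq_2)
  have h0: "qcoeff (\<lambda>z. f z * g z) 0 \<noteq> 0"
    using qh[of 0] Gf(3) Gg(3) f0 g0 by simp
  have c21: "qcoeff (\<lambda>z. f z * g z) 2 = qcoeff (\<lambda>z. f z * g z) 1"
    using hecke_two[OF hh] psi1 phi1 psi2 h0 by simp
  have "a 1 * b 1 = 0"
    using c21 unfolding c1 c2 a12 b12 by (simp add: field_simps)
  moreover have qf1: "qcoeff f 1 = a 1" using Gf(3) by (simp add: a_def)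
  moreover have qg1: "qcoeff g 1 = b 1" using Gg(3) by (simp add: b_def)
  ultimately have "qcoeff f 1 = 0 \<or> qcoeff g 1 = 0" by simp
  then show False
  proof
    assume "qcoeff f 1 = 0"
    then have "\<forall>z\<in>UHP. f z = qcoeff f 0" by (rule const_of_a1[OF hf assms(2)])
    moreover have "0 < k" using assms(4) by simp
    ultimately show False using const_contra[OF mff assms(2)] f0 by blast
  next
    assume "qcoeff g 1 = 0"
    then have "\<forall>z\<in>UHP. g z = qcoeff g 0" by (rule const_of_a1[OF hg assms(3)])
    moreover have "0 < l" using assms(4,5) by simp
    ultimately show False using const_contra[OF mfg assms(3)] g0 by blast
  qed
qed

end
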